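(* Let $\Omega\subset\mathbb{R}^n$ ($n\ge2$) be a bounded domain and $1\le s<\infty$. Let $\mathcal{T}$ be a family of essential tubes for $\Omega$ such that the corresponding components $\Omega_T$, $T\in\mathcal{T}$, are pairwise disjoint, and let the parameters of $T\in\mathcal{T}$ be $r_T,l_T,c_T$ (so $T=T_{l_T,r_T,c_T}$). If \[ E_{\mathcal{T}}=\sum_{T\in\mathcal{T}} c_T\,(r_T)^n\left(\frac{l_T}{r_T}\right)^{s+1}=\infty, \] then $\Omega$ is not an $L^s$-averaging domain.
   Context: For $k\ge1$, $D_r^k\subset\mathbb{R}^k$ is the closed $k$-dimensional disk of radius $r$ centered at the origin. A tube $T_{l,r}$ is the image under a Euclidean transformation of $[0,l]\times D_r^{n-1}$; its wall is the image of $[0,l]\times\partial D_r^{n-1}$, and for $t\in[0,l]$ the $t$-th slice of a subset of $T$ is its intersection with the image of $\{t\}\times D_r^{n-1}$. An essential tube $T=T_{l,r,c}$ for $\Omega$ is a tube $T_{l,r}$ such that $T\cap\Omega$ has a connected component $\Omega_T$ that does not meet the wall of $T$ and such that, with $c>0$, for every $t\in[0,l]$ the $(n-1)$-dimensional measure of the $t$-th slice of $\Omega_T$ is at least $c$ times the measure of $D_r^{n-1}$. A domain $\Omega$ with $|\Omega|<\infty$ is $L^s$-averaging ($1\le s<\infty$) if there is a constant $C$ such that for all $u\in L^1_{\mathrm{loc}}(\Omega)$, $\left(\frac{1}{|\Omega|}\int_\Omega|u-u_\Omega|^s\,dz\right)^{1/s}\le C\left(\sup_{B\subset\Omega}\frac{1}{|B|}\int_B|u-u_B|^s\,dz\right)^{1/s}$,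 where $B$ ranges over open balls in $\Omega$ and $u_E$ denotes the mean of $u$ over $E$. *)

theory Defs
  imports "HOL-Analysis.Analysis"
begin

text \<open>Ambient space R^n is represented as real \<times> (real^'m), with n = CARD('m) + 1 \<ge> 2.
  The first coordinate is the axial direction of the model tube [0,l] \<times> D_r^{n-1}.\<close>

definition euclid_transf :: "('a::real_inner \<Rightarrow> 'a) \<Rightarrow> bool" where
  "euclid_transf g \<longleftrightarrow> (\<exists>Q b. orthogonal_transformation Q \<and> g = (\<lambda>x. Q x + b))"

definition tube :: "(real \<times> (real^'m) \<Rightarrow> real \<times> (real^'m)) \<Rightarrow> real \<Rightarrow> real \<Rightarrow> (real \<times> (real^'m)) set" where
  "tube g l r = g ` ({0..l} \<times> cball 0 r)"

definition tube_wall :: "(real \<times> (real^'m) \<Rightarrow> real \<times> (real^'m)) \<Rightarrow> real \<Rightarrow> real \<Rightarrow> (real \<times> (real^'m)) set" where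
  "tube_wall g l r = g ` ({0..l} \<times> sphere 0 r)"

text \<open>(n-1)-dimensional measure of the t-th slice of S, computed in the
  isometric coordinates of the tube (the slice is an isometric image of a subset of R^(n-1)).\<close>
definition slice_measure :: "(real \<times> (real^'m) \<Rightarrow> real \<times> (real^'m)) \<Rightarrow> real \<Rightarrow> (real \<times> (real^'m)) set \<Rightarrow> real \<Rightarrow> real" where
  "slice_measure g r S t = measure lebesgue {y \<in> cball 0 r. g (t, y) \<in> S}"

definition essential_tube :: "(real \<times> (real^'m)) set \<Rightarrow> (real \<times> (real^'m) \<Rightarrow> real \<times> (real^'m))
    \<Rightarrow> real \<Rightarrow> real \<Rightarrow> real \<Rightarrow> (real \<times> (real^'m)) set \<Rightarrow> bool" where
  "essential_tube \<Omega> g l r c \<Omega>T \<longleftrightarrow>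
     euclid_transf g \<and> 0 < l \<and> 0 < r \<and> 0 < c \<and>
     \<Omega>T \<in> components (tube g l r \<inter> \<Omega>) \<and>
     \<Omega>T \<inter> tube_wall g l r = {} \<and>
     (\<forall>t\<in>{0..l}. slice_measure g r \<Omega>T t \<ge> c * measure lebesgue (cball (0::real^'m) r))"

definition loc_integrable :: "('a::euclidean_space) set \<Rightarrow> ('a \<Rightarrow> real) \<Rightarrow> bool" where
  "loc_integrable \<Omega> u \<longleftrightarrow> (\<forall>K. compact K \<and> K \<subseteq> \<Omega> \<longrightarrow> set_integrable lebesgue K u)"

definition mean_val :: "('a::euclidean_space) set \<Rightarrow> ('a \<Rightarrow> real) \<Rightarrow> real" where
  "mean_val E u = (LINT z:E|lebesgue. u z) / measure lebesgue E"

definition osc_avg :: "real \<Rightarrow> ('a::euclidean_space) set \<Rightarrow> ('a \<Rightarrow> real) \<Rightarrow> ennreal" where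
  "osc_avg s E u = ennreal (1 / measure lebesgue E) *
      (\<integral>\<^sup>+ z\<in>E. ennreal (\<bar>u z - mean_val E u\<bar> powr s) \<partial>lebesgue)"

definition ennroot :: "real \<Rightarrow> ennreal \<Rightarrow> ennreal" where
  "ennroot s x = (if x = \<infinity> then \<infinity> else ennreal (enn2real x powr (1 / s)))"

definition Ls_averaging :: "real \<Rightarrow> ('a::euclidean_space) set \<Rightarrow> bool" where
  "Ls_averaging s \<Omega> \<longleftrightarrow> emeasure lebesgue \<Omega> < \<infinity> \<and>
     (\<exists>C::real. \<forall>u. loc_integrable \<Omega> u \<longrightarrow>
        ennroot s (osc_avg s \<Omega> u) \<le>
        ennreal C * ennroot s (SUP B\<in>{ball x \<rho> |x \<rho>. 0 < \<rho> \<and> ball x \<rho> \<subseteq> \<Omega>}. osc_avg s B u))"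

end

theory Submission
  imports Defs
begin


lemma borel_leb: "(A::'a::euclidean_space set) \<in> sets borel \<Longrightarrow> A \<in> sets lebesgue"
  by (simp add: sets_completionI_sets)
lemma borel_leb_em: "(A::'a::euclidean_space set) \<in> sets borel \<Longrightarrow> emeasure lebesgue A = emeasure lborel A"
  by simp
lemma borel_leb_meas: "f \<in> borel_measurable borel \<Longrightarrow> (f::'a::euclidean_space\<Rightarrow>'b::topological_space) \<in> borel_measurable lebesgue"
  by (simp add: measurable_completion)
lemma open_leb: "open (A::'a::euclidean_space set) \<Longrightarrow> A \<in> sets lebesgue"
  by (simp add: borel_leb)

lemma isometry_open_image:
  fixes \<phi> :: "'a::euclidean_space \<Rightarrow> 'a"
  assumes iso: "\<And>x y. dist (\<phi> x) (\<phi> y) = dist x y" and sj: "surj \<phi>" and U: "open U"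
  shows "open (\<phi> ` U)"
  unfolding open_dist
proof (intro ballI)
  fix z assume "z \<in> \<phi> ` U"
  then obtain w where w: "w \<in> U" "z = \<phi> w" by auto
  then obtain e where e: "e > 0" "ball w e \<subseteq> U" using U open_contains_ball by blast
  show "\<exists>e>0. \<forall>y. dist y z < e \<longrightarrow> y \<in> \<phi> ` U"
  proof (intro exI[of _ e] conjI allI impI)
    fix y assume "dist y z < e"
    obtain w' where "y = \<phi> w'" using sj by (metis surjD)
    then have "dist w w' < e" using iso w \<open>dist y z < e\<close> by (simp add: dist_commute)
    then show "y \<in> \<phi> ` U" using e \<open>y = \<phi> w'\<close> by auto
  qed (use e in auto)
qed

lemma isometry_emeasure_open:
  fixes \<phi> :: "'a::euclidean_space \<Rightarrow> 'a"
  assumes iso: "\<And>x y. dist (\<phi> x) (\<phi> y) = dist x y" and sj: "surj \<phi>" and U: "open U"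
  shows "emeasure lebesgue (\<phi> ` U) \<le> emeasure lebesgue U"
proof -
  define K where "K = {i::'a\<times>real. 0 < snd i \<and> ball (fst i) (snd i) \<subseteq> U}"
  have cov: "\<exists>i. i \<in> K \<and> x \<in> ball (fst i) (snd i) \<and> snd i < d" if xd: "x \<in> U" "0 < d" for x d
  proof -
    obtain e where e: "e > 0" "ball x e \<subseteq> U" using open_contains_ball_eq[OF U] xd(1) by metis
    have "(x, min e (d/2)) \<in> K"
      unfolding K_def using e xd by auto
    moreover have "x \<in> ball (fst (x, min e (d/2))) (snd (x, min e (d/2)))" using e xd by simp
    moreover have "snd (x, min e (d/2)) < d" using xd by simp
    ultimately show ?thesis by blast
  qed
  obtain C where C: "countable C" "C \<subseteq> K"
    and pw: "pairwise (\<lambda>i j. disjnt (ball (fst i) (snd i)) (ball (fst j) (snd j))) C"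
    and neg: "negligible (U - (\<Union>i\<in>C. ball (fst i) (snd i)))"
    using Vitali_covering_theorem_balls[of U K fst snd] cov by blast
  define N where "N = U - (\<Union>i\<in>C. ball (fst i) (snd i))"
  have negN: "negligible (\<phi> ` N)"
  proof (rule negligible_locally_Lipschitz_image)
    show "negligible N" using neg N_def by simp
    fix x assume "x \<in> N"
    show "\<exists>T B. open T \<and> x \<in> T \<and> (\<forall>y\<in>N \<inter> T. norm (\<phi> y - \<phi> x) \<le> B * norm (y - x))"
      by (rule exI[of _ UNIV], rule exI[of _ 1]) (simp add: iso dist_norm[symmetric])
  qed simp
  have sub: "\<phi> ` U \<subseteq> (\<Union>i\<in>C. ball (\<phi> (fst i)) (snd i)) \<union> \<phi> ` N"
  proof
    fix z assume "z \<in> \<phi> ` U"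
    then obtain w where w: "w \<in> U" "z = \<phi> w" by auto
    show "z \<in> (\<Union>i\<in>C. ball (\<phi> (fst i)) (snd i)) \<union> \<phi> ` N"
    proof (cases "w \<in> N")
      case True then show ?thesis using w by auto
    next
      case False
      then obtain i where "i \<in> C" "w \<in> ball (fst i) (snd i)" using w N_def by auto
      then show ?thesis using w iso by (auto simp: dist_commute)
    qed
  qed
  have disj1: "disjoint_family_on (\<lambda>i. ball (fst i) (snd i)) C"
    using pw unfolding disjoint_family_on_def pairwise_def disjnt_def by blast
  have disj2: "disjoint_family_on (\<lambda>i. ball (\<phi> (fst i)) (snd i)) C"
    unfolding disjoint_family_on_def
  proof (intro ballI impI)
    fix i j assume ij: "i \<in> C" "j \<in> C" "i \<noteq> j"
    show "ball (\<phi> (fst i)) (snd i) \<inter> ball (\<phi> (fst j)) (snd j) = {}"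
    proof (rule ccontr)
      assume "ball (\<phi> (fst i)) (snd i) \<inter> ball (\<phi> (fst j)) (snd j) \<noteq> {}"
      then obtain z where z: "z \<in> ball (\<phi> (fst i)) (snd i)" "z \<in> ball (\<phi> (fst j)) (snd j)" by blast
      obtain w where "z = \<phi> w" using sj by (metis surjD)
      then have "w \<in> ball (fst i) (snd i) \<inter> ball (fst j) (snd j)" using z iso by auto
      then show False using disj1 ij unfolding disjoint_family_on_def by blast
    qed
  qed
  have "emeasure lebesgue (\<phi> ` U) \<le> emeasure lebesgue ((\<Union>i\<in>C. ball (\<phi> (fst i)) (snd i)) \<union> \<phi> ` N)"
  proof (rule emeasure_mono[OF sub])
    have "(\<Union>i\<in>C. ball (\<phi> (fst i)) (snd i)) \<in> sets lebesgue" by (intro open_leb open_UN) auto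
    moreover have "\<phi> ` N \<in> sets lebesgue" using negN by (auto simp: negligible_iff_null_sets)
    ultimately show "(\<Union>i\<in>C. ball (\<phi> (fst i)) (snd i)) \<union> \<phi> ` N \<in> sets lebesgue" by auto
  qed
  also have "\<dots> = emeasure lebesgue (\<Union>i\<in>C. ball (\<phi> (fst i)) (snd i))"
  proof (rule emeasure_Un_null_set)
    show "(\<Union>i\<in>C. ball (\<phi> (fst i)) (snd i)) \<in> sets lebesgue" by (intro open_leb open_UN) auto
  qed (use negN in \<open>auto simp: negligible_iff_null_sets\<close>)
  also have "\<dots> = (\<integral>\<^sup>+i. emeasure lebesgue (ball (\<phi> (fst i)) (snd i)) \<partial>count_space C)"
    using C(1) disj2 by (intro emeasure_UN_countable) auto
  also have "\<dots> = (\<integral>\<^sup>+i. emeasure lebesgue (ball (fst i) (snd i)) \<partial>count_space C)"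
  proof (intro nn_integral_cong)
    fix i assume "i \<in> space (count_space C)"
    then have "snd i > 0" using C K_def by auto
    then show "emeasure lebesgue (ball (\<phi> (fst i)) (snd i)) = emeasure lebesgue (ball (fst i) (snd i))"
      using emeasure_lebesgue_ball_conv_unit_ball[of "snd i" "\<phi> (fst i)"]
        emeasure_lebesgue_ball_conv_unit_ball[of "snd i" "fst i"] by (simp only: less_imp_le)
  qed
  also have "\<dots> = emeasure lebesgue (\<Union>i\<in>C. ball (fst i) (snd i))"
    using C(1) disj1 by (intro emeasure_UN_countable[symmetric]) auto
  also have "\<dots> \<le> emeasure lebesgue U"
    using C(2) U by (intro emeasure_mono) (auto simp: K_def)
  finally show ?thesis .
qed

lemma isometry_emeasure:
  fixes \<phi> :: "'a::euclidean_space \<Rightarrow> 'a"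
  assumes iso: "\<And>x y. dist (\<phi> x) (\<phi> y) = dist x y" and sj: "surj \<phi>" and S: "S \<in> sets lebesgue"
  shows "emeasure lebesgue (\<phi> ` S) \<le> emeasure lebesgue S"
proof (rule ennreal_le_epsilon)
  fix e :: real assume "0 < e"
  then obtain T where T: "open T" "S \<subseteq> T" "(T - S) \<in> lmeasurable" "emeasure lebesgue (T - S) < ennreal e"
    using sets_lebesgue_outer_open[OF S] by blast
  have "emeasure lebesgue (\<phi> ` S) \<le> emeasure lebesgue (\<phi> ` T)"
    using T isometry_open_image[OF iso sj] by (intro emeasure_mono) auto
  also have "\<dots> \<le> emeasure lebesgue T" by (rule isometry_emeasure_open[OF iso sj T(1)])
  also have "\<dots> = emeasure lebesgue (S \<union> (T - S))"
    using T(2) by (simp add: Un_absorb1 Un_Diff_cancel)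
  also have "\<dots> = emeasure lebesgue S + emeasure lebesgue (T - S)"
    using T(3) S by (intro plus_emeasure[symmetric]) auto
  also have "\<dots> \<le> emeasure lebesgue S + ennreal e"
    using T(4) by (intro add_left_mono) simp
  finally show "emeasure lebesgue (\<phi> ` S) \<le> emeasure lebesgue S + ennreal e" .
qed



lemma isometry_continuous:
  assumes "\<And>x y. dist (f x) (f y) = dist x y"
  shows "continuous_on S f"
  unfolding continuous_on_iff using assms by (metis)

lemma et_facts:
  fixes g :: "'a::euclidean_space \<Rightarrow> 'a"
  assumes "euclid_transf g"
  shows et_dist: "\<And>x y. dist (g x) (g y) = dist x y" and et_surj: "surj g" and et_inj: "inj g"
    and et_cont: "continuous_on S g" and et_right: "\<And>z. g (inv g z) = z" and et_left: "\<And>x. inv g (g x) = x"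
    and et_inv_dist: "\<And>x y. dist (inv g x) (inv g y) = dist x y" and et_inv_surj: "surj (inv g)"
    and et_inv_cont: "continuous_on S (inv g)"
proof -
  obtain Q b where Q: "orthogonal_transformation Q" and g: "g = (\<lambda>x. Q x + b)"
    using assms unfolding euclid_transf_def by blast
  have lin: "linear Q" using Q orthogonal_transformation_linear by blast
  show d: "dist (g x) (g y) = dist x y" for x y
  proof -
    have "dist (g x) (g y) = norm (Q x - Q y)" by (simp add: g dist_norm)
    also have "\<dots> = norm (Q (x - y))" using lin by (simp add: linear_diff)
    also have "\<dots> = dist x y" using Q by (simp add: orthogonal_transformation_norm dist_norm)
    finally show ?thesis .
  qed
  show s: "surj g"
  proof -
    have "z \<in> range g" for z
    proof -
      obtain w where "Q w = z - b" using orthogonal_transformation_surj[OF Q] by (metis surjD)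
      then show ?thesis by (auto simp: g intro!: image_eqI[of _ _ w])
    qed
    then show ?thesis by auto
  qed
  show i: "inj g" unfolding inj_on_def using d by (metis dist_eq_0_iff)
  show "continuous_on S g" by (rule isometry_continuous[OF d])
  show r: "g (inv g z) = z" for z using s by (simp add: surj_f_inv_f)
  show l: "inv g (g x) = x" for x using i by simp
  show id: "dist (inv g x) (inv g y) = dist x y" for x y by (metis d r)
  show "surj (inv g)" by (metis l surjI)
  show "continuous_on S (inv g)" by (rule isometry_continuous[OF id])
qed

lemma essential_tubeD:
  assumes "essential_tube \<Omega> g l r c \<Omega>T"
  shows "euclid_transf g" "0 < l" "0 < r" "0 < c" "\<Omega>T \<in> components (tube g l r \<inter> \<Omega>)"
    "\<Omega>T \<inter> tube_wall g l r = {}"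
    "\<Omega>T \<subseteq> tube g l r" "\<Omega>T \<subseteq> \<Omega>"
  using assms in_components_subset[of \<Omega>T "tube g l r \<inter> \<Omega>"] unfolding essential_tube_def by auto

lemma essential_tube_slice:
  fixes g :: "real \<times> (real^'m) \<Rightarrow> real \<times> (real^'m)"
  assumes "essential_tube \<Omega> g l r c \<Omega>T" "t\<in>{0..l}"
  shows "slice_measure g r \<Omega>T t \<ge> c * measure lebesgue (cball (0::real^'m) r)"
proof -
  have "\<forall>t\<in>{0..l}. slice_measure g r \<Omega>T t \<ge> c * measure lebesgue (cball (0::real^'m) r)"
    using assms(1) unfolding essential_tube_def by (elim conjE) assumption
  then show ?thesis using assms(2) by (rule bspec)
qed

lemma in_tube:
  assumes T: "essential_tube \<Omega> g l r c \<Omega>T" and z: "z \<in> \<Omega>T"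
  shows "fst (inv g z) \<in> {0..l}" "norm (snd (inv g z)) < r"
proof -
  note D = essential_tubeD[OF T]
  have "z \<in> tube g l r" using D z by auto
  then obtain y where y: "y \<in> {0..l} \<times> cball 0 r" "z = g y" unfolding tube_def by auto
  have iy: "inv g z = y" using y et_left[OF D(1)] by simp
  show "fst (inv g z) \<in> {0..l}" using y iy by auto
  have "norm (snd y) \<noteq> r"
  proof
    assume "norm (snd y) = r"
    then have "z \<in> tube_wall g l r" using y unfolding tube_wall_def
      by (intro image_eqI[of _ _ y]) (auto simp: mem_Times_iff)
    then show False using D(6) z by auto
  qed
  then show "norm (snd (inv g z)) < r" using y iy by (auto simp: mem_Times_iff)
qed

lemma tube_borel:
  assumes T: "essential_tube \<Omega> g l r c \<Omega>T" and O: "open \<Omega>"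
  shows "\<Omega>T \<in> sets borel"
proof -
  note D = essential_tubeD[OF T]
  have "compact (tube g l r)" unfolding tube_def
    by (intro compact_continuous_image et_cont[OF D(1)] compact_Times) auto
  then have ct: "closed (tube g l r)" by (rule compact_imp_closed)
  obtain F where F: "closed F" "\<Omega>T = (tube g l r \<inter> \<Omega>) \<inter> F"
    using closedin_component[OF D(5)] unfolding closedin_closed by blast
  show ?thesis unfolding F(2) using ct O F(1) by (intro sets.Int borel_closed borel_open) auto
qed

lemma slab:
  assumes T: "essential_tube \<Omega> g l r c \<Omega>T"
    and B: "ball p \<rho> \<subseteq> \<Omega>" and x: "x \<in> ball p \<rho>" "x \<in> \<Omega>T"
    and w: "dist w (inv g p) < \<rho>" "fst w \<in> {0..l}"
  shows "norm (snd w) < r \<and> g w \<in> \<Omega>T"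
proof -
  note D = essential_tubeD[OF T]
  define q where "q = inv g p"
  have gq: "g q = p" using et_right[OF D(1)] q_def by simp
  have inB: "g v \<in> \<Omega>" if "dist v q < \<rho>" for v
  proof -
    have "dist p (g v) < \<rho>" using that et_dist[OF D(1), of v q] gq by (simp add: dist_commute)
    then show ?thesis using B by auto
  qed
  define x0 where "x0 = inv g x"
  have gx0: "g x0 = x" using et_right[OF D(1)] x0_def by simp
  have x0B: "dist x0 q < \<rho>" using x et_inv_dist[OF D(1), of x p] x0_def q_def by (simp add: dist_commute)
  have x0T: "fst x0 \<in> {0..l}" "norm (snd x0) < r" using in_tube[OF T x(2)] x0_def by auto
  define C where "C = ball q \<rho> \<inter> ({0..l} \<times> UNIV)"
  define K where "K = ball q \<rho> \<inter> ({0..l} \<times> cball 0 r)"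
  have "convex K" unfolding K_def by (intro convex_Int convex_Times convex_ball convex_cball) auto
  then have "connected K" by (rule convex_connected)
  then have cK: "connected (g ` K)" by (intro connected_continuous_image et_cont[OF D(1)])
  have sK: "g ` K \<subseteq> tube g l r \<inter> \<Omega>"
    unfolding K_def tube_def using inB by (auto simp: dist_commute)
  have x0K: "x0 \<in> K" using x0B x0T unfolding K_def by (auto simp: dist_commute mem_Times_iff)
  have "\<Omega>T \<inter> g ` K \<noteq> {}" using x0K gx0 x(2) by auto
  then have KT: "g ` K \<subseteq> \<Omega>T" using components_maximal[OF D(5) cK sK] by blast
  have Knr: "norm (snd v) \<noteq> r" if "v \<in> K" for v
  proof
    assume "norm (snd v) = r"
    then have "g v \<in> tube_wall g l r" using that unfolding tube_wall_def K_def
      by (intro image_eqI[of _ _ v]) (auto simp: mem_Times_iff)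
    then show False using D(6) KT that by auto
  qed
  have "convex C" unfolding C_def by (intro convex_Int convex_Times convex_ball) auto
  then have "connected C" by (rule convex_connected)
  then have "connected ((\<lambda>v. norm (snd v)) ` C)"
    by (intro connected_continuous_image continuous_intros)
  then have iv: "is_interval ((\<lambda>v. norm (snd v)) ` C)" by (simp add: is_interval_connected_1)
  have x0C: "x0 \<in> C" using x0B x0T unfolding C_def by (auto simp: dist_commute mem_Times_iff)
  have wC: "w \<in> C" using w unfolding C_def q_def by (auto simp: dist_commute mem_Times_iff)
  have "norm (snd w) < r"
  proof (rule ccontr)
    assume "\<not> norm (snd w) < r"
    then have "r \<in> (\<lambda>v. norm (snd v)) ` C"
      using iv x0C wC x0T(2) unfolding is_interval_1 by (metis imageI less_imp_le not_less)
    then obtain v where v: "v \<in> C" "norm (snd v) = r" by auto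
    then have "v \<in> K" unfolding C_def K_def by (auto simp: mem_Times_iff)
    then show False using Knr v by auto
  qed
  moreover then have "w \<in> K" using wC unfolding C_def K_def by (auto simp: mem_Times_iff)
  ultimately show ?thesis using KT by auto
qed



definition tent :: "real \<Rightarrow> real \<Rightarrow> real \<Rightarrow> real" where
  "tent l r t = min t (l - t) / r"

lemma tent_lip:
  assumes "r > 0" shows "\<bar>tent l r a - tent l r b\<bar> \<le> \<bar>a - b\<bar> / r"
proof -
  have "\<bar>min a (l - a) - min b (l - b)\<bar> \<le> \<bar>a - b\<bar>" by (auto simp: min_def abs_if)
  then have "\<bar>min a (l - a) - min b (l - b)\<bar> / r \<le> \<bar>a - b\<bar> / r" using assms by (simp add: divide_right_mono)
  then show ?thesis unfolding tent_def using assms by (simp add: diff_divide_distrib[symmetric])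
qed

lemma tent_bounds:
  assumes "r > 0" "t \<in> {0..l}" shows "0 \<le> tent l r t" "tent l r t \<le> l / r"
  using assms unfolding tent_def by (auto simp: min_def divide_right_mono)

lemma unit_vec_pos:
  fixes y :: "real^'m"
  obtains v where "norm v = 1" "inner y v \<ge> 0"
proof -
  obtain v0 :: "real^'m" where v0: "norm v0 = 1" using vector_choose_size[of 1] by auto
  show ?thesis
  proof (cases "inner y v0 \<ge> 0")
    case True then show ?thesis using that v0 by blast
  next
    case False then show ?thesis using that[of "- v0"] v0 by simp
  qed
qed

lemma ball_in_tube:
  fixes g :: "real \<times> (real^'m) \<Rightarrow> real \<times> (real^'m)"
  assumes T: "essential_tube \<Omega> g l r c \<Omega>T"
    and B: "ball p \<rho> \<subseteq> \<Omega>" and x: "x \<in> ball p \<rho>" "x \<in> \<Omega>T"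
    and big: "tent l r (fst (inv g x)) > 2"
  shows "ball p \<rho> \<subseteq> \<Omega>T \<and> (\<forall>z\<in>ball p \<rho>. \<bar>tent l r (fst (inv g z)) - tent l r (fst (inv g p))\<bar> \<le> 1)"
proof -
  note D = essential_tubeD[OF T]
  define q where "q = inv g p"
  define x0 where "x0 = inv g x"
  have x0B: "dist x0 q < \<rho>" using x et_inv_dist[OF D(1), of x p] x0_def q_def by (simp add: dist_commute)
  have x0T: "fst x0 \<in> {0..l}" using in_tube[OF T x(2)] x0_def by auto
  have r0: "r > 0" using D by auto
  have bx: "2 * r < fst x0" "fst x0 < l - 2 * r"
    using big r0 unfolding tent_def x0_def[symmetric] by (auto simp: min_def field_simps split: if_splits)
  have fx: "\<bar>fst x0 - fst q\<bar> < \<rho>" using dist_fst_le[of x0 q] x0B by (simp add: dist_real_def)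
  obtain v :: "real^'m" where v: "norm v = 1" "inner (snd q) v \<ge> 0" using unit_vec_pos by blast
  have nv: "norm (snd q + r *\<^sub>R v) \<ge> r"
  proof -
    have "inner (snd q + r *\<^sub>R v) v = inner (snd q) v + r"
      using v by (simp add: inner_add_left inner_scaleR_left dot_square_norm)
    moreover have "inner (snd q + r *\<^sub>R v) v \<le> norm (snd q + r *\<^sub>R v)"
      using norm_cauchy_schwarz[of "snd q + r *\<^sub>R v" v] v by simp
    ultimately show ?thesis using v by linarith
  qed
  have key: "\<rho>\<^sup>2 \<le> (t - fst q)\<^sup>2 + r\<^sup>2" if t: "t \<in> {0..l}" for t
  proof (rule ccontr)
    assume "\<not> ?thesis"
    then have lt: "(t - fst q)\<^sup>2 + r\<^sup>2 < \<rho>\<^sup>2" by simp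
    have "dist (t, snd q + r *\<^sub>R v) q = sqrt ((t - fst q)\<^sup>2 + r\<^sup>2)"
    proof -
      have "dist (t, snd q + r *\<^sub>R v) q = dist (t, snd q + r *\<^sub>R v) (fst q, snd q)" by simp
      also have "\<dots> = sqrt ((dist t (fst q))\<^sup>2 + (dist (snd q + r *\<^sub>R v) (snd q))\<^sup>2)"
        by (rule dist_Pair_Pair)
      also have "dist (snd q + r *\<^sub>R v) (snd q) = r" using v r0 by (simp add: dist_norm)
      finally show ?thesis by (simp add: dist_real_def)
    qed
    also have "\<dots> < \<rho>"
    proof -
      have "\<rho> > 0" using x(1) zero_le_dist[of p x] by (simp only: mem_ball)
      then show ?thesis using lt by (metis abs_of_pos real_sqrt_abs real_sqrt_less_mono)
    qed
    finally have "dist (t, snd q + r *\<^sub>R v) (inv g p) < \<rho>" unfolding q_def .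
    from slab[OF T B x this] t have "norm (snd q + r *\<^sub>R v) < r" by simp
    then show False using nv by simp
  qed
  have tq: "fst q \<in> {0..l}"
  proof (rule ccontr)
    assume "fst q \<notin> {0..l}"
    then consider "fst q < 0" | "fst q > l" by force
    then show False
    proof cases
      case 1
      have k: "\<rho>\<^sup>2 \<le> (0 - fst q)\<^sup>2 + r\<^sup>2" using key[of 0] D(2) by simp
      have "\<rho> > 2 * r - fst q" using fx bx 1 by linarith
      moreover have "2 * r - fst q > 0" using r0 1 by simp
      ultimately have "\<rho>\<^sup>2 > (2 * r - fst q)\<^sup>2" by (simp add: power_strict_mono)
      moreover have "(2 * r - fst q)\<^sup>2 = (0 - fst q)\<^sup>2 + r\<^sup>2 + (3 * r\<^sup>2 - 4 * (r * fst q))"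
        by (simp add: power2_eq_square algebra_simps)
      moreover have "r * fst q < 0" using r0 1 by (simp add: mult_pos_neg)
      moreover have "r\<^sup>2 > 0" using r0 by simp
      ultimately show False using k by linarith
    next
      case 2
      have k: "\<rho>\<^sup>2 \<le> (l - fst q)\<^sup>2 + r\<^sup>2" using key[of l] D(2) by simp
      have "\<rho> > 2 * r + (fst q - l)" using fx bx 2 by linarith
      moreover have "2 * r + (fst q - l) > 0" using r0 2 by simp
      ultimately have "\<rho>\<^sup>2 > (2 * r + (fst q - l))\<^sup>2" by (simp add: power_strict_mono)
      moreover have "(2 * r + (fst q - l))\<^sup>2 = (l - fst q)\<^sup>2 + r\<^sup>2 + (3 * r\<^sup>2 + 4 * (r * (fst q - l)))"
        by (simp add: power2_eq_square algebra_simps)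
      moreover have "r * (fst q - l) > 0" using r0 2 by simp
      moreover have "r\<^sup>2 > 0" using r0 by simp
      ultimately show False using k by linarith
    qed
  qed
  have "\<rho>\<^sup>2 \<le> r\<^sup>2" using key[OF tq] by simp
  then have rr: "\<rho> \<le> r" by (rule power2_le_imp_le) (use r0 in simp)
  have main: "z \<in> \<Omega>T \<and> \<bar>tent l r (fst (inv g z)) - tent l r (fst (inv g p))\<bar> \<le> 1" if z: "z \<in> ball p \<rho>" for z
  proof -
    define w where "w = inv g z"
    have wB: "dist w q < \<rho>" using z et_inv_dist[OF D(1), of z p] w_def q_def by (simp add: dist_commute)
    have fw: "\<bar>fst w - fst q\<bar> < \<rho>" using dist_fst_le[of w q] wB by (simp add: dist_real_def)
    have "fst w \<in> {0..l}" using fw fx rr bx by auto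
    then have "g w \<in> \<Omega>T" using slab[OF T B x] wB q_def by blast
    moreover have "g w = z" using et_right[OF D(1)] w_def by simp
    moreover have "\<bar>tent l r (fst w) - tent l r (fst q)\<bar> \<le> 1"
    proof -
      have "\<bar>tent l r (fst w) - tent l r (fst q)\<bar> \<le> \<bar>fst w - fst q\<bar> / r" by (rule tent_lip[OF r0])
      also have "\<dots> \<le> 1" using fw rr r0 by (simp add: divide_le_eq)
      finally show ?thesis .
    qed
    ultimately show ?thesis using w_def q_def by simp
  qed
  then show ?thesis by auto
qed



lemma cball_measure_scale:
  assumes "r \<ge> 0"
  shows "measure lebesgue (cball (0::real^'m) r) = r ^ CARD('m) * measure lebesgue (cball (0::real^'m) 1)"
proof -
  have "measure lebesgue (cball (0::real^'m) r) = measure lborel (cball (0::real^'m) r)" by simp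
  also have "\<dots> = measure lborel (ball (0::real^'m) r)" by (rule content_cball_conv_ball)
  also have "\<dots> = r ^ DIM(real^'m) * measure lborel (ball (0::real^'m) 1)"
    by (rule content_ball_conv_unit_ball[OF assms])
  also have "measure lborel (ball (0::real^'m) 1) = measure lborel (cball (0::real^'m) 1)"
    by (rule content_cball_conv_ball[symmetric])
  finally show ?thesis by simp
qed

lemma unit_cball_pos: "measure lebesgue (cball (0::real^'m) 1) > 0"
  using content_cball_pos[of 1 "0::real^'m"] by simp

lemma tube_slab_measure:
  fixes g :: "real \<times> (real^'m) \<Rightarrow> real \<times> (real^'m)"
  assumes T: "essential_tube \<Omega> g l r c \<Omega>T" and O: "open \<Omega>" and ab: "a \<le> b" "0 \<le> a" "b \<le> l"
  shows "emeasure lebesgue {z\<in>\<Omega>T. fst (inv g z) \<in> {a..b}}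
           \<ge> ennreal ((b - a) * (c * measure lebesgue (cball (0::real^'m) r)))"
proof -
  note D = essential_tubeD[OF T]
  define S where "S = {z\<in>\<Omega>T. fst (inv g z) \<in> {a..b}}"
  define A where "A = {w. g w \<in> \<Omega>T \<and> fst w \<in> {a..b}}"
  have bT: "\<Omega>T \<in> sets borel" by (rule tube_borel[OF T O])
  have cg: "continuous_on UNIV g" by (rule et_cont[OF D(1)])
  have cig: "continuous_on UNIV (\<lambda>z. fst (inv g z))"
    by (intro continuous_on_compose2[OF continuous_on_fst et_inv_cont[OF D(1)]]) auto
  have imS: "inv g ` S = A"
  proof
    show "inv g ` S \<subseteq> A" unfolding S_def A_def using et_right[OF D(1)] by auto
    show "A \<subseteq> inv g ` S"
    proof
      fix w assume "w \<in> A"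
      then show "w \<in> inv g ` S" unfolding S_def A_def using et_left[OF D(1)]
        by (intro image_eqI[of _ _ "g w"]) auto
    qed
  qed
  have Sb: "S \<in> sets borel"
  proof -
    have "(\<lambda>z. fst (inv g z)) \<in> borel_measurable borel" by (rule borel_measurable_continuous_onI[OF cig])
    then have "(\<lambda>z. fst (inv g z)) -` {a..b} \<inter> space borel \<in> sets borel" by (rule measurable_sets) simp
    then have "{z. fst (inv g z) \<in> {a..b}} \<in> sets borel" by (simp add: vimage_def)
    then show ?thesis unfolding S_def using bT by (simp add: Collect_conj_eq sets.Int)
  qed
  have Ab: "A \<in> sets borel"
  proof -
    have "g \<in> borel_measurable borel" by (rule borel_measurable_continuous_onI[OF cg])
    then have "g -` \<Omega>T \<inter> space borel \<in> sets borel" using bT by (rule measurable_sets)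
    moreover have "fst -` {a..b} \<inter> space borel \<in> sets (borel :: (real \<times> (real^'m)) measure)"
      by (rule measurable_sets[OF borel_measurable_continuous_onI[OF continuous_on_fst[OF continuous_on_id]]]) simp
    ultimately have "(g -` \<Omega>T \<inter> space borel) \<inter> (fst -` {a..b} \<inter> space borel) \<in> sets borel" by (rule sets.Int)
    moreover have "(g -` \<Omega>T \<inter> space borel) \<inter> (fst -` {a..b} \<inter> space borel) = A" unfolding A_def by auto
    ultimately show ?thesis by simp
  qed
  have f1: "emeasure lebesgue A \<le> emeasure lebesgue S"
    unfolding imS[symmetric] by (rule isometry_emeasure[OF et_inv_dist[OF D(1)] et_inv_surj[OF D(1)] borel_leb[OF Sb]])
  have f2: "emeasure lebesgue A = emeasure (lborel \<Otimes>\<^sub>M lborel) A"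
    using Ab by (simp add: lborel_prod)
  have f3: "emeasure (lborel \<Otimes>\<^sub>M lborel) A = (\<integral>\<^sup>+t. emeasure lborel (Pair t -` A) \<partial>lborel)"
    using Ab by (intro lborel.emeasure_pair_measure_alt) (simp only: lborel_prod sets_lborel)
  have f4: "(\<integral>\<^sup>+t. emeasure lborel (Pair t -` A) \<partial>lborel)
      \<ge> (\<integral>\<^sup>+t. ennreal (c * measure lebesgue (cball (0::real^'m) r)) * indicator {a..b} t \<partial>lborel)"
  proof (rule nn_integral_mono)
    fix t :: real
    show "ennreal (c * measure lebesgue (cball (0::real^'m) r)) * indicator {a..b} t \<le> emeasure lborel (Pair t -` A)"
    proof (cases "t \<in> {a..b}")
      case False then show ?thesis by simp
    next
      case True
      then have t0: "t \<in> {0..l}" using ab by auto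
      have eq: "Pair t -` A = {y \<in> cball 0 r. g (t, y) \<in> \<Omega>T}"
      proof -
        have "norm y < r" if "g (t, y) \<in> \<Omega>T" for y
          using in_tube(2)[OF T that] et_left[OF D(1)] by simp
        then show ?thesis unfolding A_def using True by (auto simp: less_imp_le)
      qed
      have "A \<in> sets (lborel \<Otimes>\<^sub>M (lborel :: (real^'m) measure))" using Ab by (simp only: lborel_prod sets_lborel)
      then have "Pair t -` A \<in> sets (lborel :: (real^'m) measure)" by (rule sets_Pair1)
      then have Pb: "Pair t -` A \<in> sets borel" by simp
      have "Pair t -` A \<subseteq> cball 0 r" using eq by auto
      then have "bounded (Pair t -` A)" using bounded_subset bounded_cball by blast
      then have "emeasure lborel (Pair t -` A) < \<infinity>" by (rule emeasure_bounded_finite)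
      then have fin: "emeasure lebesgue (Pair t -` A) \<noteq> \<infinity>" using Pb by simp
      have "emeasure lborel (Pair t -` A) = emeasure lebesgue (Pair t -` A)" using Pb by simp
      also have "\<dots> = ennreal (measure lebesgue (Pair t -` A))" using fin by (simp add: emeasure_eq_ennreal_measure)
      also have "measure lebesgue (Pair t -` A) = slice_measure g r \<Omega>T t" unfolding slice_measure_def eq ..
      finally have "emeasure lborel (Pair t -` A) = ennreal (slice_measure g r \<Omega>T t)" .
      moreover have "c * measure lebesgue (cball (0::real^'m) r) \<le> slice_measure g r \<Omega>T t"
        by (rule essential_tube_slice[OF T t0])
      ultimately show ?thesis using True by (simp add: ennreal_leI)
    qed
  qed
  have f5: "(\<integral>\<^sup>+t. ennreal (c * measure lebesgue (cball (0::real^'m) r)) * indicator {a..b} t \<partial>lborel)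
      = ennreal ((b - a) * (c * measure lebesgue (cball (0::real^'m) r)))"
  proof -
    define K where "K = c * measure lebesgue (cball (0::real^'m) r)"
    have K0: "K \<ge> 0" using D by (simp add: K_def)
    have "(\<integral>\<^sup>+t. ennreal K * indicator {a..b} t \<partial>lborel) = ennreal K * emeasure lborel {a..b}"
      by (rule nn_integral_cmult_indicator) simp
    also have "\<dots> = ennreal K * ennreal (b - a)" using ab by (simp add: emeasure_lborel_Icc)
    also have "\<dots> = ennreal ((b - a) * K)" using K0 ab by (simp add: ennreal_mult'[symmetric] mult.commute)
    finally show ?thesis unfolding K_def .
  qed
  have "ennreal ((b - a) * (c * measure lebesgue (cball (0::real^'m) r))) \<le> emeasure lebesgue A"
    unfolding f2 f3 f5[symmetric] by (rule f4)
  then show ?thesis unfolding S_def[symmetric] using f1 by (rule order_trans)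
qed



lemma set_integrable_const_real:
  assumes "A \<in> sets M" "emeasure M A < \<infinity>"
  shows "set_integrable M A (\<lambda>_. (k::real))"
  unfolding set_integrable_def using integrable_real_indicator[OF assms]
  by (simp add: integrable_mult_left)

lemma slab_set_borel:
  fixes g :: "real \<times> (real^'m) \<Rightarrow> real \<times> (real^'m)"
  assumes T: "essential_tube \<Omega> g l r c \<Omega>T" and O: "open \<Omega>"
  shows "{z\<in>\<Omega>T. fst (inv g z) \<in> {a..b}} \<in> sets borel"
proof -
  note D = essential_tubeD[OF T]
  have bT: "\<Omega>T \<in> sets borel" by (rule tube_borel[OF T O])
  have cig: "continuous_on UNIV (\<lambda>z. fst (inv g z))"
    by (intro continuous_on_compose2[OF continuous_on_fst et_inv_cont[OF D(1)]]) auto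
  have "(\<lambda>z. fst (inv g z)) \<in> borel_measurable borel" by (rule borel_measurable_continuous_onI[OF cig])
  then have "(\<lambda>z. fst (inv g z)) -` {a..b} \<inter> space borel \<in> sets borel" by (rule measurable_sets) simp
  then have "{z. fst (inv g z) \<in> {a..b}} \<in> sets borel" by (simp add: vimage_def)
  then show ?thesis using bT by (simp add: Collect_conj_eq sets.Int)
qed

lemma tent_cont: "r > 0 \<Longrightarrow> continuous_on UNIV (tent l r)"
  unfolding tent_def by (intro continuous_intros) auto

lemma tent_powr_alg:
  fixes l r s c w :: real
  assumes l: "l > 0" and r: "r > 0"
  shows "(l / (8 * r)) powr s * ((l / 8) * (c * (r ^ k * w)))
       = w / 8 powr (s + 1) * (c * r ^ (k + 1) * (l / r) powr (s + 1))"
proof -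
  have lr: "l / r > 0" using l r by (rule divide_pos_pos)
  have "(l / (8 * r)) powr s = (l / r) powr s / 8 powr s"
    using powr_divide[of "l / r" 8 s] lr by (simp add: field_simps)
  moreover have "(l / r) powr (s + 1) = (l / r) powr s * (l / r)" using lr l r by (simp add: powr_add)
  moreover have "(8::real) powr (s + 1) = 8 powr s * 8" by (simp add: powr_add)
  ultimately show ?thesis using l r by (simp add: field_simps)
qed

locale tubes =
  fixes \<Omega> :: "(real \<times> (real^'m)) set" and I :: "'i set"
    and g :: "'i \<Rightarrow> real \<times> (real^'m) \<Rightarrow> real \<times> (real^'m)"
    and l r c :: "'i \<Rightarrow> real" and \<Omega>T :: "'i \<Rightarrow> (real \<times> (real^'m)) set" and F :: "'i set"
  assumes O: "open \<Omega>" and bd: "bounded \<Omega>"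
    and ET: "\<forall>i\<in>I. essential_tube \<Omega> (g i) (l i) (r i) (c i) (\<Omega>T i)"
    and DJ: "\<forall>i\<in>I. \<forall>j\<in>I. i \<noteq> j \<longrightarrow> \<Omega>T i \<inter> \<Omega>T j = {}"
    and FI: "finite F" "F \<subseteq> I"
begin

definition u :: "real \<times> (real^'m) \<Rightarrow> real" where
  "u z = (\<Sum>i\<in>F. indicator (\<Omega>T i) z * tent (l i) (r i) (fst (inv (g i) z)))"

lemma ETF: "i \<in> F \<Longrightarrow> essential_tube \<Omega> (g i) (l i) (r i) (c i) (\<Omega>T i)"
  using ET FI by auto

lemma u_in:
  assumes i: "i \<in> F" and z: "z \<in> \<Omega>T i"
  shows "u z = tent (l i) (r i) (fst (inv (g i) z))"
proof -
  have "u z = indicator (\<Omega>T i) z * tent (l i) (r i) (fst (inv (g i) z))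
      + (\<Sum>j\<in>F - {i}. indicator (\<Omega>T j) z * tent (l j) (r j) (fst (inv (g j) z)))"
    unfolding u_def by (rule sum.remove[OF FI(1) i])
  also have "(\<Sum>j\<in>F - {i}. indicator (\<Omega>T j) z * tent (l j) (r j) (fst (inv (g j) z))) = 0"
  proof (rule sum.neutral, intro ballI)
    fix j assume "j \<in> F - {i}"
    then have "z \<notin> \<Omega>T j" using DJ FI i z by blast
    then show "indicator (\<Omega>T j) z * tent (l j) (r j) (fst (inv (g j) z)) = 0" by simp
  qed
  finally show ?thesis using z by simp
qed

lemma u_out:
  assumes "\<forall>i\<in>F. z \<notin> \<Omega>T i" shows "u z = 0"
  unfolding u_def using assms by (intro sum.neutral) auto

definition M :: real where "M = (\<Sum>i\<in>F. l i / r i)"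

lemma term_bounds:
  assumes "i \<in> F"
  shows "0 \<le> indicator (\<Omega>T i) z * tent (l i) (r i) (fst (inv (g i) z))"
    "indicator (\<Omega>T i) z * tent (l i) (r i) (fst (inv (g i) z)) \<le> l i / r i"
proof -
  note D = essential_tubeD[OF ETF[OF assms]]
  have "0 \<le> indicator (\<Omega>T i) z * tent (l i) (r i) (fst (inv (g i) z)) \<and>
        indicator (\<Omega>T i) z * tent (l i) (r i) (fst (inv (g i) z)) \<le> l i / r i"
  proof (cases "z \<in> \<Omega>T i")
    case True
    have "fst (inv (g i) z) \<in> {0..l i}" by (rule in_tube(1)[OF ETF[OF assms] True])
    then show ?thesis using tent_bounds[of "r i"] D True by auto
  next
    case False then show ?thesis using D by simp
  qed
  then show "0 \<le> indicator (\<Omega>T i) z * tent (l i) (r i) (fst (inv (g i) z))"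
    "indicator (\<Omega>T i) z * tent (l i) (r i) (fst (inv (g i) z)) \<le> l i / r i" by auto
qed

lemma u_nonneg: "0 \<le> u z"
  unfolding u_def by (intro sum_nonneg term_bounds(1))

lemma u_le: "u z \<le> M"
  unfolding u_def M_def by (intro sum_mono term_bounds(2))

lemma u_meas: "u \<in> borel_measurable borel"
proof -
  have "(\<lambda>z. indicator (\<Omega>T i) z * tent (l i) (r i) (fst (inv (g i) z))) \<in> borel_measurable borel"
    if i: "i \<in> F" for i
  proof -
    note D = essential_tubeD[OF ETF[OF i]]
    have c1: "continuous_on UNIV (\<lambda>z. fst (inv (g i) z))"
      by (intro continuous_on_compose2[OF continuous_on_fst et_inv_cont[OF D(1)]]) auto
    have "continuous_on UNIV (\<lambda>z. tent (l i) (r i) (fst (inv (g i) z)))"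
      using continuous_on_compose2[OF tent_cont[OF D(3)] c1] by auto
    then have m1: "(\<lambda>z. tent (l i) (r i) (fst (inv (g i) z))) \<in> borel_measurable borel"
      by (rule borel_measurable_continuous_onI)
    have m2: "(indicator (\<Omega>T i) :: _ \<Rightarrow> real) \<in> borel_measurable borel"
      using tube_borel[OF ETF[OF i] O] by (rule borel_measurable_indicator)
    show ?thesis using m2 m1 by (rule borel_measurable_times)
  qed
  then show ?thesis unfolding u_def by (rule borel_measurable_sum)
qed

lemma u_int:
  assumes "A \<in> sets lebesgue" "emeasure lebesgue A < \<infinity>"
  shows "set_integrable lebesgue A u"
proof (rule set_integrable_bound[OF set_integrable_const_real[OF assms, of M]])
  show "set_borel_measurable lebesgue A u"
    unfolding set_borel_measurable_def using assms(1) borel_leb_meas[OF u_meas]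
    by (intro borel_measurable_scaleR borel_measurable_indicator) auto
  show "AE x in lebesgue. x \<in> A \<longrightarrow> norm (u x) \<le> norm M"
    using u_nonneg u_le by (intro AE_I2) (metis abs_of_nonneg order_trans real_norm_def)
qed

lemma u_ball:
  assumes B: "ball p \<rho> \<subseteq> \<Omega>"
  shows "\<exists>a. \<forall>z\<in>ball p \<rho>. a \<le> u z \<and> u z \<le> a + 2"
proof (cases "\<forall>z\<in>ball p \<rho>. u z \<le> 2")
  case True then show ?thesis using u_nonneg by (intro exI[of _ 0]) auto
next
  case False
  then obtain z0 where z0: "z0 \<in> ball p \<rho>" "u z0 > 2" by (auto simp: not_le)
  then obtain i where i: "i \<in> F" "z0 \<in> \<Omega>T i" using u_out by fastforce
  have "tent (l i) (r i) (fst (inv (g i) z0)) > 2" using z0 u_in[OF i] by simp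
  from ball_in_tube[OF ETF[OF i(1)] B z0(1) i(2) this]
  have bt: "ball p \<rho> \<subseteq> \<Omega>T i"
    "\<forall>z\<in>ball p \<rho>. \<bar>tent (l i) (r i) (fst (inv (g i) z)) - tent (l i) (r i) (fst (inv (g i) p))\<bar> \<le> 1"
    by auto
  show ?thesis
  proof (intro exI[of _ "tent (l i) (r i) (fst (inv (g i) p)) - 1"] ballI)
    fix z assume z: "z \<in> ball p \<rho>"
    then have "z \<in> \<Omega>T i" using bt(1) by blast
    then have uz: "u z = tent (l i) (r i) (fst (inv (g i) z))" by (rule u_in[OF i(1)])
    have "\<bar>tent (l i) (r i) (fst (inv (g i) z)) - tent (l i) (r i) (fst (inv (g i) p))\<bar> \<le> 1"
      using bt(2) z by blast
    then show "tent (l i) (r i) (fst (inv (g i) p)) - 1 \<le> u z \<and> u z \<le> tent (l i) (r i) (fst (inv (g i) p)) - 1 + 2"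
      using uz by (simp add: abs_le_iff)
  qed
qed

end



context tubes begin

lemma osc_ball:
  assumes s: "0 \<le> s" and B: "ball p \<rho> \<subseteq> \<Omega>" and \<rho>: "0 < \<rho>"
  shows "osc_avg s (ball p \<rho>) u \<le> ennreal (2 powr s)"
proof -
  let ?B = "ball p \<rho>"
  have Bs: "?B \<in> sets lebesgue" by (simp add: open_leb)
  have "emeasure lborel ?B < \<infinity>" by (rule emeasure_bounded_finite) simp
  then have Bfin: "emeasure lebesgue ?B < \<infinity>" by simp
  have mpos: "measure lebesgue ?B > 0" using content_ball_pos[OF \<rho>, of p] by simp
  obtain a where a: "\<forall>z\<in>?B. a \<le> u z \<and> u z \<le> a + 2" using u_ball[OF B] by blast
  have ui: "set_integrable lebesgue ?B u" by (rule u_int[OF Bs Bfin])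
  have ci: "set_integrable lebesgue ?B (\<lambda>_. k)" for k :: real by (rule set_integrable_const_real[OF Bs Bfin])
  have Bfin': "emeasure lebesgue ?B \<noteq> \<infinity>" using Bfin by simp
  have cst: "(LINT z:?B|lebesgue. k) = measure lebesgue ?B * k" for k :: real
    using set_integral_const[OF Bs Bfin', of k] by simp
  have "(LINT z:?B|lebesgue. a) \<le> (LINT z:?B|lebesgue. u z)"
    by (rule set_integral_mono[OF ci ui]) (use a in auto)
  then have lo: "measure lebesgue ?B * a \<le> (LINT z:?B|lebesgue. u z)" unfolding cst .
  have "(LINT z:?B|lebesgue. u z) \<le> (LINT z:?B|lebesgue. a + 2)"
    by (rule set_integral_mono[OF ui ci]) (use a in auto)
  then have hi: "(LINT z:?B|lebesgue. u z) \<le> measure lebesgue ?B * (a + 2)" unfolding cst .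
  define m where "m = mean_val ?B u"
  have am: "a \<le> m" "m \<le> a + 2"
    using lo hi mpos unfolding m_def mean_val_def by (simp_all add: le_divide_eq divide_le_eq mult.commute)
  have pt: "\<bar>u z - m\<bar> \<le> 2" if "z \<in> ?B" for z using a that am by fastforce
  have "(\<integral>\<^sup>+z. ennreal (\<bar>u z - m\<bar> powr s) * indicator ?B z \<partial>lebesgue)
      \<le> (\<integral>\<^sup>+z. ennreal (2 powr s) * indicator ?B z \<partial>lebesgue)"
  proof (rule nn_integral_mono)
    fix z
    show "ennreal (\<bar>u z - m\<bar> powr s) * indicator ?B z \<le> ennreal (2 powr s) * indicator ?B z"
    proof (cases "z \<in> ?B")
      case True
      then have "\<bar>u z - m\<bar> powr s \<le> 2 powr s" using pt s by (intro powr_mono2) auto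
      then show ?thesis using True by (simp add: ennreal_leI)
    qed simp
  qed
  also have "\<dots> = ennreal (2 powr s) * emeasure lebesgue ?B"
    by (rule nn_integral_cmult_indicator[OF Bs])
  also have "\<dots> = ennreal (2 powr s) * ennreal (measure lebesgue ?B)"
    using Bfin by (simp add: emeasure_eq_ennreal_measure)
  finally have I: "(\<integral>\<^sup>+z. ennreal (\<bar>u z - m\<bar> powr s) * indicator ?B z \<partial>lebesgue)
      \<le> ennreal (2 powr s) * ennreal (measure lebesgue ?B)" .
  have "osc_avg s ?B u = ennreal (1 / measure lebesgue ?B) * (\<integral>\<^sup>+z. ennreal (\<bar>u z - m\<bar> powr s) * indicator ?B z \<partial>lebesgue)"
    unfolding osc_avg_def m_def ..
  also have "\<dots> \<le> ennreal (1 / measure lebesgue ?B) * (ennreal (2 powr s) * ennreal (measure lebesgue ?B))"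
    using I by (rule mult_left_mono) simp
  also have "\<dots> = ennreal (1 / measure lebesgue ?B * (2 powr s * measure lebesgue ?B))"
    using mpos by (simp add: ennreal_mult'[symmetric] ennreal_mult[symmetric])
  also have "1 / measure lebesgue ?B * (2 powr s * measure lebesgue ?B) = 2 powr s" using mpos by simp
  finally show ?thesis .
qed

lemma lower:
  assumes s: "0 \<le> s"
  shows "ennreal (\<Sum>i\<in>F. measure lebesgue (cball (0::real^'m) 1) / 8 powr (s + 1) *
            (c i * r i ^ (CARD('m) + 1) * (l i / r i) powr (s + 1)))
       \<le> (\<integral>\<^sup>+z. ennreal (\<bar>u z - m\<bar> powr s) * indicator \<Omega> z \<partial>lebesgue)"
proof -
  define lo where "lo i = (if m \<ge> l i / (4 * r i) then 0 else 3 * l i / 8)" for i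
  define hi where "hi i = lo i + l i / 8" for i
  define S where "S i = {z\<in>\<Omega>T i. fst (inv (g i) z) \<in> {lo i..hi i}}" for i
  define \<delta> where "\<delta> i = (l i / 8) / r i" for i
  define \<omega> where "\<omega> = measure lebesgue (cball (0::real^'m) 1)"
  have Sleb: "S i \<in> sets lebesgue" if "i \<in> F" for i
    unfolding S_def by (rule borel_leb[OF slab_set_borel[OF ETF[OF that] O]])
  have Sdist: "\<delta> i \<le> \<bar>u z - m\<bar>" if i: "i \<in> F" and z: "z \<in> S i" for i z
  proof -
    note D = essential_tubeD[OF ETF[OF i]]
    define t where "t = fst (inv (g i) z)"
    have zT: "z \<in> \<Omega>T i" and t: "lo i \<le> t" "t \<le> hi i" using z unfolding S_def t_def by auto
    have uz: "u z = min t (l i - t) / r i" using u_in[OF i zT] unfolding tent_def t_def .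
    have q: "l i / (4 * r i) = 2 * \<delta> i" unfolding \<delta>_def by (simp add: field_simps)
    show ?thesis
    proof (cases "m \<ge> l i / (4 * r i)")
      case True
      then have "t \<le> l i / 8" using t unfolding hi_def lo_def by simp
      then have "min t (l i - t) \<le> l i / 8" using min.cobounded1[of t "l i - t"] by linarith
      then have "u z \<le> \<delta> i" unfolding uz \<delta>_def by (rule divide_right_mono) (use D(3) in simp)
      then show ?thesis using True q by linarith
    next
      case False
      then have "3 * l i / 8 \<le> t" "t \<le> l i / 2" using t unfolding hi_def lo_def by auto
      then have "3 * (l i / 8) \<le> min t (l i - t)" by simp
      then have "3 * (l i / 8) / r i \<le> u z" unfolding uz by (rule divide_right_mono) (use D(3) in simp)
      then have "3 * \<delta> i \<le> u z" unfolding \<delta>_def by simp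
      then show ?thesis using False q by linarith
    qed
  qed
  have Smeas: "ennreal ((l i / 8) * (c i * measure lebesgue (cball (0::real^'m) (r i)))) \<le> emeasure lebesgue (S i)"
    if i: "i \<in> F" for i
  proof -
    note D = essential_tubeD[OF ETF[OF i]]
    have "lo i \<le> hi i" using D(2) unfolding hi_def by simp
    moreover have "0 \<le> lo i" using D(2) unfolding lo_def by simp
    moreover have "hi i \<le> l i" using D(2) unfolding hi_def lo_def by simp
    ultimately have "lo i \<le> hi i" "0 \<le> lo i" "hi i \<le> l i" by auto
    from tube_slab_measure[OF ETF[OF i] O this] show ?thesis unfolding S_def hi_def by simp
  qed
  have pw: "(\<Sum>i\<in>F. ennreal (\<delta> i powr s) * indicator (S i) z) \<le> ennreal (\<bar>u z - m\<bar> powr s) * indicator \<Omega> z" for z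
  proof (cases "\<exists>i\<in>F. z \<in> S i")
    case False
    then have "(\<Sum>i\<in>F. ennreal (\<delta> i powr s) * indicator (S i) z) = 0" by (intro sum.neutral) auto
    then show ?thesis by simp
  next
    case True
    then obtain i where i: "i \<in> F" "z \<in> S i" by blast
    note D = essential_tubeD[OF ETF[OF i(1)]]
    have zO: "z \<in> \<Omega>" using i D(8) unfolding S_def by auto
    have "(\<Sum>j\<in>F. ennreal (\<delta> j powr s) * indicator (S j) z)
        = ennreal (\<delta> i powr s) * indicator (S i) z + (\<Sum>j\<in>F - {i}. ennreal (\<delta> j powr s) * indicator (S j) z)"
      by (rule sum.remove[OF FI(1) i(1)])
    also have "(\<Sum>j\<in>F - {i}. ennreal (\<delta> j powr s) * indicator (S j) z) = 0"
    proof (rule sum.neutral, intro ballI)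
      fix j assume j: "j \<in> F - {i}"
      have "z \<in> \<Omega>T i" using i unfolding S_def by auto
      then have "z \<notin> \<Omega>T j" using DJ FI i j by blast
      then show "ennreal (\<delta> j powr s) * indicator (S j) z = 0" unfolding S_def by simp
    qed
    also have "\<delta> i powr s \<le> \<bar>u z - m\<bar> powr s"
    proof (rule powr_mono2[OF s])
      show "0 \<le> \<delta> i" unfolding \<delta>_def using D by simp
    qed (rule Sdist[OF i])
    then have "ennreal (\<delta> i powr s) * indicator (S i) z + 0 \<le> ennreal (\<bar>u z - m\<bar> powr s) * indicator \<Omega> z"
      using i zO by (simp add: ennreal_leI)
    finally show ?thesis .
  qed
  have eqterm: "\<omega> / 8 powr (s + 1) * (c i * r i ^ (CARD('m) + 1) * (l i / r i) powr (s + 1))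
      = \<delta> i powr s * ((l i / 8) * (c i * measure lebesgue (cball (0::real^'m) (r i))))" if i: "i \<in> F" for i
  proof -
    note D = essential_tubeD[OF ETF[OF i]]
    have "\<delta> i = l i / (8 * r i)" unfolding \<delta>_def by simp
    moreover have "measure lebesgue (cball (0::real^'m) (r i)) = r i ^ CARD('m) * \<omega>"
      unfolding \<omega>_def by (rule cball_measure_scale) (use D(3) in simp)
    ultimately show ?thesis using tent_powr_alg[OF D(2) D(3), of s "c i" "CARD('m)" \<omega>] by simp
  qed
  have nonneg: "0 \<le> \<delta> i powr s * ((l i / 8) * (c i * measure lebesgue (cball (0::real^'m) (r i))))" if "i \<in> F" for i
    using essential_tubeD[OF ETF[OF that]] by simp
  have "ennreal (\<Sum>i\<in>F. \<omega> / 8 powr (s + 1) * (c i * r i ^ (CARD('m) + 1) * (l i / r i) powr (s + 1)))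
      = ennreal (\<Sum>i\<in>F. \<delta> i powr s * ((l i / 8) * (c i * measure lebesgue (cball (0::real^'m) (r i)))))"
    by (rule arg_cong[where f=ennreal], rule sum.cong[OF refl eqterm])
  also have "\<dots> = (\<Sum>i\<in>F. ennreal (\<delta> i powr s * ((l i / 8) * (c i * measure lebesgue (cball (0::real^'m) (r i))))))"
    using nonneg by (simp add: sum_ennreal)
  also have "\<dots> \<le> (\<Sum>i\<in>F. ennreal (\<delta> i powr s) * emeasure lebesgue (S i))"
  proof (rule sum_mono)
    fix i assume i: "i \<in> F"
    have "ennreal (\<delta> i powr s * ((l i / 8) * (c i * measure lebesgue (cball (0::real^'m) (r i)))))
        = ennreal (\<delta> i powr s) * ennreal ((l i / 8) * (c i * measure lebesgue (cball (0::real^'m) (r i))))"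
      by (rule ennreal_mult) (use essential_tubeD[OF ETF[OF i]] in simp_all)
    also have "\<dots> \<le> ennreal (\<delta> i powr s) * emeasure lebesgue (S i)"
      by (rule mult_left_mono[OF Smeas[OF i]]) simp
    finally show "ennreal (\<delta> i powr s * ((l i / 8) * (c i * measure lebesgue (cball (0::real^'m) (r i)))))
        \<le> ennreal (\<delta> i powr s) * emeasure lebesgue (S i)" .
  qed
  also have "\<dots> = (\<Sum>i\<in>F. \<integral>\<^sup>+z. ennreal (\<delta> i powr s) * indicator (S i) z \<partial>lebesgue)"
    by (intro sum.cong refl nn_integral_cmult_indicator[symmetric] Sleb)
  also have "\<dots> = (\<integral>\<^sup>+z. (\<Sum>i\<in>F. ennreal (\<delta> i powr s) * indicator (S i) z) \<partial>lebesgue)"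
    by (rule nn_integral_sum[symmetric]) (use Sleb in auto)
  also have "\<dots> \<le> (\<integral>\<^sup>+z. ennreal (\<bar>u z - m\<bar> powr s) * indicator \<Omega> z \<partial>lebesgue)"
    by (rule nn_integral_mono) (rule pw)
  finally show ?thesis unfolding \<omega>_def .
qed

end



lemma ennroot_le:
  assumes s: "0 < s" and y: "0 \<le> y" and x: "x \<le> ennreal y"
  shows "ennroot s x \<le> ennreal (y powr (1 / s))"
proof -
  have xi: "x \<noteq> \<infinity>" using x by (auto simp: top_unique)
  have "enn2real x \<le> y" using x y by (intro enn2real_leI)
  then have "enn2real x powr (1 / s) \<le> y powr (1 / s)" using s by (intro powr_mono2) auto
  then show ?thesis unfolding ennroot_def using xi by (simp add: ennreal_leI)
qed

lemma ennroot_ge: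
  assumes s: "0 < s" and y: "0 \<le> y" and x: "ennreal y \<le> x"
  shows "ennreal (y powr (1 / s)) \<le> ennroot s x"
proof (cases "x = \<infinity>")
  case True then show ?thesis unfolding ennroot_def by simp
next
  case False
  then have "enn2real (ennreal y) \<le> enn2real x" using x by (intro enn2real_mono) (auto simp: top.not_eq_extremum)
  then have "y \<le> enn2real x" using y by simp
  then have "y powr (1 / s) \<le> enn2real x powr (1 / s)" using s y by (intro powr_mono2) auto
  then show ?thesis unfolding ennroot_def using False by (simp add: ennreal_leI)
qed

theorem mainTheorem2:
  fixes \<Omega> :: "(real \<times> (real^'m)) set" and s :: real and I :: "'i set"
    and g :: "'i \<Rightarrow> real \<times> (real^'m) \<Rightarrow> real \<times> (real^'m)"
    and l r c :: "'i \<Rightarrow> real" and \<Omega>T :: "'i \<Rightarrow> (real \<times> (real^'m)) set"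
  assumes "open \<Omega>" and "connected \<Omega>" and "\<Omega> \<noteq> {}" and "bounded \<Omega>"
    and "1 \<le> s"
    and "\<forall>i\<in>I. essential_tube \<Omega> (g i) (l i) (r i) (c i) (\<Omega>T i)"
    and "\<forall>i\<in>I. \<forall>j\<in>I. i \<noteq> j \<longrightarrow> \<Omega>T i \<inter> \<Omega>T j = {}"
    and "(\<Sum>\<^sub>\<infinity>i\<in>I. ennreal (c i * r i ^ (CARD('m) + 1) * (l i / r i) powr (s + 1))) = \<infinity>"
  shows "\<not> Ls_averaging s \<Omega>"
proof
  note O = assms(1) and ne = assms(3) and bd = assms(4) and s1 = assms(5)
    and ET = assms(6) and DJ = assms(7) and hinf = assms(8)
  have s0: "0 < s" using s1 by simp
  assume "Ls_averaging s \<Omega>"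
  then obtain C where C: "\<forall>u. loc_integrable \<Omega> u \<longrightarrow> ennroot s (osc_avg s \<Omega> u) \<le>
        ennreal C * ennroot s (SUP B\<in>{ball x \<rho> |x \<rho>. 0 < \<rho> \<and> ball x \<rho> \<subseteq> \<Omega>}. osc_avg s B u)"
    unfolding Ls_averaging_def by blast
  define C0 where "C0 = max C 0"
  have C0: "0 \<le> C0" "C \<le> C0" unfolding C0_def by auto
  define a where "a i = c i * r i ^ (CARD('m) + 1) * (l i / r i) powr (s + 1)" for i
  define \<omega> where "\<omega> = measure lebesgue (cball (0::real^'m) 1)"
  define \<kappa> where "\<kappa> = \<omega> / 8 powr (s + 1)"
  have \<kappa>: "\<kappa> > 0" unfolding \<kappa>_def \<omega>_def using unit_cball_pos by simp
  define m\<Omega> where "m\<Omega> = measure lebesgue \<Omega>"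
  have Oleb: "\<Omega> \<in> lmeasurable" using bd O by (intro bounded_set_imp_lmeasurable open_leb)
  have m\<Omega>: "m\<Omega> > 0"
  proof -
    obtain x where "x \<in> \<Omega>" using ne by blast
    then obtain e where e: "e > 0" "ball x e \<subseteq> \<Omega>" using O open_contains_ball_eq by blast
    have "measure lebesgue (ball x e) \<le> measure lebesgue \<Omega>"
      by (rule measure_mono_fmeasurable[OF e(2) _ Oleb]) (simp add: open_leb)
    moreover have "measure lebesgue (ball x e) > 0" using content_ball_pos[OF e(1), of x] by simp
    ultimately show ?thesis unfolding m\<Omega>_def by linarith
  qed
  define P where "P = (2 * C0 + 1) powr s"
  have P0: "P \<ge> 0" unfolding P_def by simp
  define K where "K = m\<Omega> * P / \<kappa>"
  have an: "0 \<le> a i" if "i \<in> I" for i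
  proof -
    have "essential_tube \<Omega> (g i) (l i) (r i) (c i) (\<Omega>T i)" using ET that by blast
    note D = essential_tubeD[OF this]
    show ?thesis unfolding a_def using D(3,4) by simp
  qed
  have "(\<Sum>\<^sub>\<infinity>i\<in>I. ennreal (a i)) = (SUP F\<in>{F. finite F \<and> F \<subseteq> I}. sum (\<lambda>i. ennreal (a i)) F)"
    by (rule nonneg_infsum_complete) simp
  moreover have "(\<Sum>\<^sub>\<infinity>i\<in>I. ennreal (a i)) = \<infinity>" using hinf unfolding a_def .
  ultimately have "ennreal K < (SUP F\<in>{F. finite F \<and> F \<subseteq> I}. sum (\<lambda>i. ennreal (a i)) F)" by simp
  then obtain F where F: "finite F" "F \<subseteq> I" "ennreal K < sum (\<lambda>i. ennreal (a i)) F"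
    by (auto simp: less_SUP_iff)
  have "sum (\<lambda>i. ennreal (a i)) F = ennreal (sum a F)" using F(2) an by (intro sum_ennreal) auto
  then have eK: "ennreal K < ennreal (sum a F)" using F(3) by simp
  have sF: "sum a F \<ge> 0" using F(2) an by (intro sum_nonneg) auto
  have KF: "K < sum a F"
  proof (cases "K \<ge> 0")
    case True then show ?thesis using eK by (simp add: ennreal_less_iff)
  next
    case False then show ?thesis using sF by simp
  qed
  interpret tubes \<Omega> I g l r c \<Omega>T F
    using O bd ET DJ F(1,2) by unfold_locales auto
  have li: "loc_integrable \<Omega> u"
    unfolding loc_integrable_def
  proof (intro allI impI)
    fix Kc :: "(real \<times> (real^'m)) set" assume Kc: "compact Kc \<and> Kc \<subseteq> \<Omega>"
    have "Kc \<in> sets borel" using Kc by (simp add: borel_compact)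
    then have Ks: "Kc \<in> sets lebesgue" by (rule borel_leb)
    have "emeasure lborel Kc < \<infinity>" using Kc by (intro emeasure_bounded_finite compact_imp_bounded) auto
    then have "emeasure lebesgue Kc < \<infinity>" using \<open>Kc \<in> sets borel\<close> by simp
    then show "set_integrable lebesgue Kc u" by (rule u_int[OF Ks])
  qed
  have sup: "(SUP B\<in>{ball x \<rho> |x \<rho>. 0 < \<rho> \<and> ball x \<rho> \<subseteq> \<Omega>}. osc_avg s B u) \<le> ennreal (2 powr s)"
  proof (rule SUP_least)
    fix B assume "B \<in> {ball x \<rho> |x \<rho>. 0 < \<rho> \<and> ball x \<rho> \<subseteq> \<Omega>}"
    then obtain x \<rho> where "B = ball x \<rho>" "0 < \<rho>" "ball x \<rho> \<subseteq> \<Omega>" by blast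
    then show "osc_avg s B u \<le> ennreal (2 powr s)" using osc_ball s0 by simp
  qed
  have "ennroot s (SUP B\<in>{ball x \<rho> |x \<rho>. 0 < \<rho> \<and> ball x \<rho> \<subseteq> \<Omega>}. osc_avg s B u) \<le> ennreal ((2 powr s) powr (1 / s))"
    by (rule ennroot_le[OF s0 _ sup]) simp
  also have "(2 powr s) powr (1 / s) = 2" using s0 by (simp add: powr_powr)
  finally have R: "ennroot s (SUP B\<in>{ball x \<rho> |x \<rho>. 0 < \<rho> \<and> ball x \<rho> \<subseteq> \<Omega>}. osc_avg s B u) \<le> ennreal 2" .
  have Rb: "ennreal C * ennroot s (SUP B\<in>{ball x \<rho> |x \<rho>. 0 < \<rho> \<and> ball x \<rho> \<subseteq> \<Omega>}. osc_avg s B u) \<le> ennreal (C0 * 2)"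
  proof -
    have "ennreal C * ennroot s (SUP B\<in>{ball x \<rho> |x \<rho>. 0 < \<rho> \<and> ball x \<rho> \<subseteq> \<Omega>}. osc_avg s B u) \<le> ennreal C0 * ennreal 2"
      using R C0 by (intro mult_mono ennreal_leI) auto
    also have "\<dots> = ennreal (C0 * 2)" using C0 by (simp add: ennreal_mult)
    finally show ?thesis .
  qed
  define mm where "mm = mean_val \<Omega> u"
  have low: "ennreal (\<kappa> * sum a F) \<le> (\<integral>\<^sup>+z. ennreal (\<bar>u z - mm\<bar> powr s) * indicator \<Omega> z \<partial>lebesgue)"
    using lower[of s mm] s0 unfolding \<kappa>_def \<omega>_def a_def by (simp add: sum_distrib_left mult.assoc)
  have "\<kappa> * K \<le> \<kappa> * sum a F" using KF \<kappa> by simp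
  moreover have "\<kappa> * K = m\<Omega> * P" unfolding K_def using \<kappa> by simp
  ultimately have "ennreal (m\<Omega> * P) \<le> ennreal (\<kappa> * sum a F)" by (intro ennreal_leI) simp
  then have low2: "ennreal (m\<Omega> * P) \<le> (\<integral>\<^sup>+z. ennreal (\<bar>u z - mm\<bar> powr s) * indicator \<Omega> z \<partial>lebesgue)"
    using low by (rule order_trans)
  have "ennreal P = ennreal (1 / m\<Omega>) * ennreal (m\<Omega> * P)"
    using m\<Omega> P0 by (simp add: ennreal_mult[symmetric])
  also have "\<dots> \<le> ennreal (1 / m\<Omega>) * (\<integral>\<^sup>+z. ennreal (\<bar>u z - mm\<bar> powr s) * indicator \<Omega> z \<partial>lebesgue)"
    using low2 by (rule mult_left_mono) simp
  also have "\<dots> = osc_avg s \<Omega> u" unfolding osc_avg_def mm_def m\<Omega>_def ..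
  finally have "ennreal P \<le> osc_avg s \<Omega> u" .
  then have "ennreal (P powr (1 / s)) \<le> ennroot s (osc_avg s \<Omega> u)" by (rule ennroot_ge[OF s0 P0])
  also have "P powr (1 / s) = 2 * C0 + 1" unfolding P_def using s0 C0 by (simp add: powr_powr)
  finally have L: "ennreal (2 * C0 + 1) \<le> ennroot s (osc_avg s \<Omega> u)" .
  have "ennreal (2 * C0 + 1) \<le> ennreal (C0 * 2)" using L C li Rb by (meson order_trans)
  moreover have c2: "0 \<le> C0 * 2" using C0 by simp
  ultimately have "2 * C0 + 1 \<le> C0 * 2" by (simp only: ennreal_le_iff[OF c2])
  then show False by simp
qed


end
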